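(* Let $\Sigma$ be an alphabet with $|\Sigma|\geq 3$ and let $T=U\cdot P\cdot V$ be a string over $\Sigma$ such that $P$ is a non-empty string occurring exactly once in $T$ and $|U|,|V|<|P|$. Then there exists a string $P'$ over $\Sigma$ with $d_H(P,P')=1$ such that $T'=U\cdot P'\cdot V$ has no occurrence of $P$.
   Context: $\cdot$ denotes concatenation; $d_H$ is the Hamming distance between strings of equal length. *)

theory Defs
  imports Main
begin

definition occurs_at :: "'a list \<Rightarrow> 'a list \<Rightarrow> nat \<Rightarrow> bool" where
  "occurs_at P T i \<longleftrightarrow> i + length P \<le> length T \<and> take (length P) (drop i T) = P"

definition occ :: "'a list \<Rightarrow> 'a list \<Rightarrow> nat set" where
  "occ P T = {i. occurs_at P T i}"

definition hamming :: "'a list \<Rightarrow> 'a list \<Rightarrow> nat" where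
  "hamming xs ys = card {i. i < length xs \<and> xs ! i \<noteq> ys ! i}"

end

theory Submission
  imports Defs
begin

lemma occurs_at_nth:
  "occurs_at P T i \<longleftrightarrow> i + length P \<le> length T \<and> (\<forall>t<length P. T ! (i + t) = P ! t)"
  unfolding occurs_at_def
  by (auto simp: list_eq_iff_nth_eq)

lemma uniq_mod:
  assumes "occurs_at P (T[j1:=c1]) i" "occurs_at P (T[j2:=c2]) i" "\<not> occurs_at P T i"
    "j1 < length T" "j2 < length T"
  shows "j1 = j2 \<and> c1 = c2"
proof -
  have L: "i + length P \<le> length T" using assms(1) by (simp add: occurs_at_nth)
  then obtain t where t: "t < length P" "T ! (i + t) \<noteq> P ! t"
    using assms(3) by (auto simp: occurs_at_nth)
  have a: "T[j1:=c1] ! (i+t) = P ! t" using assms(1) t(1) by (simp add: occurs_at_nth)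
  have b: "T[j2:=c2] ! (i+t) = P ! t" using assms(2) t(1) by (simp add: occurs_at_nth)
  have "i + t = j1" using a t L by (cases "i+t = j1") (auto simp: nth_list_update)
  moreover have "i + t = j2" using b t L by (cases "i+t = j2") (auto simp: nth_list_update)
  ultimately show ?thesis using a b L t by auto
qed

theorem lemma7:
  fixes \<Sigma> :: "'a set" and U P V :: "'a list"
  assumes "finite \<Sigma>" and "card \<Sigma> \<ge> 3"
    and "set (U @ P @ V) \<subseteq> \<Sigma>"
    and "P \<noteq> []"
    and "card (occ P (U @ P @ V)) = 1"
    and "length U < length P" and "length V < length P"
  shows "\<exists>P'. set P' \<subseteq> \<Sigma> \<and> length P' = length P \<and> hamming P P' = 1
              \<and> occ P (U @ P' @ V) = {}"
proof (rule ccontr)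
  assume contra: "\<not> ?thesis"
  define T where "T = U @ P @ V"
  define m where "m = length P"
  define C where "C = Sigma {..<m} (\<lambda>k. \<Sigma> - {P ! k})"
  define S where "S = {i. i \<le> length U + length V \<and> i \<noteq> length U}"
  have occU: "length U \<in> occ P T" unfolding occ_def occurs_at_def T_def by simp
  have occT: "occ P T = {length U}"
    using assms(5) occU unfolding T_def[symmetric]
    by (metis card_1_singletonE singletonD)
  have upd: "U @ P[k:=c] @ V = T[length U + k := c]" if "k < m" for k c
    using that unfolding T_def m_def by (simp add: list_update_append)
  have good: "set (P[k:=c]) \<subseteq> \<Sigma> \<and> length (P[k:=c]) = length P \<and> hamming P (P[k:=c]) = 1"
    if "(k,c) \<in> C" for k c
  proof -
    have k: "k < m" "c \<in> \<Sigma>" "c \<noteq> P ! k" using that unfolding C_def by auto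
    have "set (P[k:=c]) \<subseteq> insert c (set P)" by (rule set_update_subset_insert)
    hence s: "set (P[k:=c]) \<subseteq> \<Sigma>" using assms(3) k by auto
    have "{i. i < length P \<and> P ! i \<noteq> P[k:=c] ! i} = {k}"
      using k unfolding m_def by (auto simp: nth_list_update)
    thus ?thesis using s unfolding hamming_def by simp
  qed
  have bad: "\<exists>i. i \<in> S \<and> occurs_at P (T[length U + k := c]) i" if "(k,c) \<in> C" for k c
  proof -
    have k: "k < m" "c \<noteq> P ! k" using that unfolding C_def by auto
    from contra good[OF that] obtain i where i: "i \<in> occ P (U @ P[k:=c] @ V)" by blast
    hence oi: "occurs_at P (T[length U + k := c]) i" using upd[OF k(1)] unfolding occ_def by simp
    have "i \<noteq> length U"
    proof
      assume "i = length U"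
      hence "take (length P) (drop (length U) (U @ P[k:=c] @ V)) = P"
        using i unfolding occ_def occurs_at_def by simp
      hence "P[k:=c] = P" by simp
      thus False using k unfolding m_def by (metis nth_list_update_eq)
    qed
    moreover have "i \<le> length U + length V"
      using oi unfolding occurs_at_def T_def by simp
    ultimately show ?thesis using oi unfolding S_def by blast
  qed
  define f where "f i = (SOME kc. kc \<in> C \<and> occurs_at P (T[length U + fst kc := snd kc]) i)" for i
  have sub: "C \<subseteq> f ` S"
  proof
    fix kc assume kc: "kc \<in> C"
    obtain k c where kce: "kc = (k,c)" by (cases kc)
    obtain i where i: "i \<in> S" "occurs_at P (T[length U + k := c]) i"
      using bad kc kce by blast
    have ex: "\<exists>kc. kc \<in> C \<and> occurs_at P (T[length U + fst kc := snd kc]) i"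
      using kc kce i by auto
    have fi: "f i \<in> C \<and> occurs_at P (T[length U + fst (f i) := snd (f i)]) i"
      unfolding f_def using someI_ex[OF ex] .
    have ni: "\<not> occurs_at P T i" using i(1) occT unfolding S_def occ_def by auto
    have lt: "length U + k < length T" using kc kce unfolding C_def T_def m_def by auto
    have lt2: "length U + fst (f i) < length T" using fi unfolding C_def T_def m_def by auto
    from uniq_mod[OF i(2) conjunct2[OF fi] ni lt lt2] have "f i = kc"
      using kce by (cases "f i") auto
    thus "kc \<in> f ` S" using i(1) by blast
  qed
  have finS: "finite S" unfolding S_def by simp
  have cardS: "card S = length U + length V"
  proof -
    have "S = {..length U + length V} - {length U}" unfolding S_def by auto
    thus ?thesis by simp
  qed
  have "card C = (\<Sum>k<m. card (\<Sigma> - {P ! k}))"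
    unfolding C_def using assms(1) by (simp add: card_SigmaI)
  also have "\<dots> \<ge> (\<Sum>k<m. 2)"
  proof (rule sum_mono)
    fix k
    have "card (\<Sigma> - {P ! k}) \<ge> card \<Sigma> - 1"
      by (metis card_Diff_singleton_if diff_le_self le_refl)
    thus "2 \<le> card (\<Sigma> - {P ! k})" using assms(2) by linarith
  qed
  finally have "card C \<ge> 2 * m" by simp
  moreover have "card C \<le> card (f ` S)"
    using sub finS by (simp add: card_mono)
  moreover have "card (f ` S) \<le> card S" using finS by (rule card_image_le)
  ultimately show False using cardS assms(6,7) unfolding m_def by linarith
qed

end
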